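(* Let $K$ be a field, $A\subset K$ a finite set with $|A|=m$, $0\le p\le m$, and $X=\{x_1,\dots,x_r\}$ a set of indeterminates with $r\le m-p$. Let $B\subset K$ be any finite set with $|B|\ge p$. Then in $K[X]$, $$\sum_{A'\subset A,\ |A'|=p}\mathcal{R}(A\setminus A',B)\frac{\mathcal{R}(X,A')}{\mathcal{R}(A\setminus A',A')}=\sum_{B'\subset B,\ |B'|=p}\mathcal{R}(A,B\setminus B')\frac{\mathcal{R}(X,B')}{\mathcal{R}(B',B\setminus B')}.$$
   Context: For finite sets $Y,Z$ of elements or indeterminates, $\mathcal{R}(Y,Z):=\prod_{y\in Y,z\in Z}(y-z)$, with $\mathcal{R}(Y,Z)=1$ if $Y$ or $Z$ is empty (in particular when $r=0$). *)

theory Defs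
  imports Main "HOL-Library.Poly_Mapping"
begin

definition Res :: "'a::comm_ring_1 set \<Rightarrow> 'a set \<Rightarrow> 'a" where
  "Res Y Z = (\<Prod>y\<in>Y. \<Prod>z\<in>Z. (y - z))"

text \<open>Multivariate polynomial ring K[x_0, x_1, ...]: monomials are finitely supported
  exponent maps nat => nat, polynomials are finitely supported coefficient maps.\<close>
type_synonym 'k mpoly = "(nat \<Rightarrow>\<^sub>0 nat) \<Rightarrow>\<^sub>0 'k"

definition mconst :: "'k::comm_ring_1 \<Rightarrow> 'k mpoly" where
  "mconst c = Poly_Mapping.single 0 c"

definition mvar :: "nat \<Rightarrow> 'k::comm_ring_1 mpoly" where
  "mvar i = Poly_Mapping.single (Poly_Mapping.single i 1) 1"

end

theory Submission imports Defs "HOL-Computational_Algebra.Polynomial" begin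


definition Pp :: "'k::field set \<Rightarrow> 'k poly" where "Pp S = (\<Prod>s\<in>S. [:-s,1:])"
definition sg :: "nat \<Rightarrow> 'k::field set \<Rightarrow> 'k" where "sg j S = coeff (Pp S) j"
definition wt :: "nat list \<Rightarrow> 'k::field set \<Rightarrow> 'k" where "wt es S = prod_list (map (\<lambda>j. sg j S) es)"
definition cA :: "'k::field set \<Rightarrow> 'k set \<Rightarrow> 'k set \<Rightarrow> 'k" where
  "cA A B A' = Res (A - A') B / Res (A - A') A'"
definition dB :: "'k::field set \<Rightarrow> 'k set \<Rightarrow> 'k set \<Rightarrow> 'k" where
  "dB A B B' = Res A (B - B') / Res B' (B - B')"
definition LS where "LS A B p es = (\<Sum>A'\<in>{A'. A' \<subseteq> A \<and> card A' = p}. cA A B A' * wt es A')"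
definition RS where "RS A B p es = (\<Sum>B'\<in>{B'. B' \<subseteq> B \<and> card B' = p}. dB A B B' * wt es B')"
definition G where "G A B p es = (\<Sum>A'\<in>{A'. A' \<subseteq> A \<and> card A' = p}. smult (cA A B A' * wt es A') (Pp A'))
   - (\<Sum>B'\<in>{B'. B' \<subseteq> B \<and> card B' = p}. smult (dB A B B' * wt es B') (Pp B'))"

lemma poly_Pp: "poly (Pp S) x = (\<Prod>s\<in>S. x - s)"
  by (simp add: Pp_def poly_prod)

lemma degree_Pp: "finite S \<Longrightarrow> degree (Pp S) = card S"
  unfolding Pp_def by (subst degree_prod_eq_sum_degree) auto

lemma lead_Pp: "finite S \<Longrightarrow> coeff (Pp S) (card S) = 1"
  using lead_coeff_prod[of "\<lambda>s. [:-s,1:]" S] degree_Pp[of S] by (simp add: Pp_def)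

lemma wt_Cons: "wt (j#es) S = sg j S * wt es S" by (simp add: wt_def)

lemma coeff_G: "coeff (G A B p es) j = LS A B p (j#es) - RS A B p (j#es)"
  by (simp add: G_def LS_def RS_def coeff_sum wt_Cons sg_def mult.commute mult.left_commute)

lemma Res_insert_left: "finite Z \<Longrightarrow> finite C \<Longrightarrow> a \<notin> C \<Longrightarrow> Res (insert a C) Z = poly (Pp Z) a * Res C Z"
  by (simp add: Res_def poly_Pp)

lemma Res_insert_right: "finite Z \<Longrightarrow> finite Y \<Longrightarrow> b \<notin> Z \<Longrightarrow> Res Y (insert b Z) = (\<Prod>y\<in>Y. y - b) * Res Y Z"
  by (simp add: Res_def prod.distrib)

lemma Res_nz: "finite Y \<Longrightarrow> finite Z \<Longrightarrow> Y \<inter> Z = {} \<Longrightarrow> Res Y Z \<noteq> (0::'k::field)"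
  by (auto simp: Res_def prod_zero_iff)

lemma poly_Pp_nz: "finite Z \<Longrightarrow> a \<notin> Z \<Longrightarrow> poly (Pp Z) (a::'k::field) \<noteq> 0"
  by (auto simp: poly_Pp prod_zero_iff)

lemma poly_Pp_z: "finite Z \<Longrightarrow> a \<in> Z \<Longrightarrow> poly (Pp Z) (a::'k::field) = 0"
  by (auto simp: poly_Pp prod_zero_iff)

lemma prod_neg: "finite Y \<Longrightarrow> (\<Prod>y\<in>Y. y - b) = (-1::'k::field)^card Y * (\<Prod>y\<in>Y. b - y)"
proof -
  assume "finite Y"
  have "(\<Prod>y\<in>Y. y - b) = (\<Prod>y\<in>Y. (-1) * (b - y))" by simp
  also have "\<dots> = (-1)^card Y * (\<Prod>y\<in>Y. b - y)" by (subst prod.distrib) simp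
  finally show ?thesis .
qed

lemma ptA_L:
  assumes "finite A" "a \<in> A" "A' \<subseteq> A - {a}" "finite B"
  shows "cA A B A' * poly (Pp A') a = poly (Pp B) a * cA (A - {a}) B A'"
proof -
  define C where "C = A - {a} - A'"
  have fA': "finite A'" using assms finite_subset by blast
  have fC: "finite C" using assms by (simp add: C_def)
  have eq: "A - A' = insert a C" "A - {a} - A' = C" using assms by (auto simp: C_def)
  have aC: "a \<notin> C" by (simp add: C_def)
  have n1: "poly (Pp A') a \<noteq> 0" using poly_Pp_nz[OF fA'] assms by auto
  have n2: "Res C A' \<noteq> 0" using Res_nz[OF fC fA'] by (auto simp: C_def)
  show ?thesis unfolding cA_def eq
    using Res_insert_left[OF assms(4) fC aC] Res_insert_left[OF fA' fC aC] n1 n2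
    by (simp add: field_simps)
qed

lemma ptA_R:
  assumes "finite A" "a \<in> A" "B' \<subseteq> B" "finite B"
  shows "dB A B B' * poly (Pp B') a = poly (Pp B) a * dB (A - {a}) B B'"
proof -
  have fB': "finite (B - B')" using assms by simp
  have eq: "A = insert a (A - {a})" using assms by auto
  have "Res A (B - B') = poly (Pp (B - B')) a * Res (A - {a}) (B - B')"
    by (subst eq, rule Res_insert_left) (use assms in auto)
  moreover have "poly (Pp B) a = poly (Pp (B - B')) a * poly (Pp B') a"
    unfolding poly_Pp using prod.subset_diff[OF assms(3,4)] by simp
  ultimately show ?thesis unfolding dB_def by (simp add: field_simps)
qed

lemma evalA:
  assumes "finite A" "a \<in> A" "finite B"
  shows "poly (G A B p es) a = poly (Pp B) a * (LS (A - {a}) B p es - RS (A - {a}) B p es)"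
proof -
  have L: "(\<Sum>A'\<in>{A'. A' \<subseteq> A \<and> card A' = p}. cA A B A' * wt es A' * poly (Pp A') a)
     = (\<Sum>A'\<in>{A'. A' \<subseteq> A - {a} \<and> card A' = p}. cA A B A' * wt es A' * poly (Pp A') a)"
    by (rule sum.mono_neutral_right)
       (use assms in \<open>auto intro: finite_subset poly_Pp_z simp: finite_Collect_subsets\<close>)
  also have "\<dots> = (\<Sum>A'\<in>{A'. A' \<subseteq> A - {a} \<and> card A' = p}. poly (Pp B) a * (cA (A - {a}) B A' * wt es A'))"
    by (rule sum.cong[OF refl]) (use ptA_L[OF assms(1,2) _ assms(3)] in \<open>auto simp: mult_ac\<close>)
  finally have L': "(\<Sum>A'\<in>{A'. A' \<subseteq> A \<and> card A' = p}. cA A B A' * wt es A' * poly (Pp A') a)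
     = poly (Pp B) a * LS (A - {a}) B p es" by (simp add: LS_def sum_distrib_left)
  have R': "(\<Sum>B'\<in>{B'. B' \<subseteq> B \<and> card B' = p}. dB A B B' * wt es B' * poly (Pp B') a)
     = poly (Pp B) a * RS (A - {a}) B p es"
    unfolding RS_def sum_distrib_left
    by (rule sum.cong[OF refl]) (use ptA_R[OF assms(1,2) _ assms(3)] in \<open>auto simp: mult_ac\<close>)
  show ?thesis using L' R' by (simp add: G_def poly_sum right_diff_distrib)
qed

lemma ptB_L:
  assumes "finite A" "b \<in> B" "A' \<subseteq> A" "finite B"
  shows "cA A B A' * poly (Pp A') b = (-1)^(card A - card A') * poly (Pp A) b * cA A (B - {b}) A'"
proof -
  have fA': "finite A'" using assms finite_subset by blast
  have eq: "B = insert b (B - {b})" using assms by auto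
  have "Res (A - A') B = (\<Prod>y\<in>A - A'. y - b) * Res (A - A') (B - {b})"
    by (subst eq, rule Res_insert_right) (use assms in auto)
  also have "(\<Prod>y\<in>A - A'. y - b) = (-1)^(card A - card A') * poly (Pp (A - A')) b"
    using prod_neg[of "A - A'" b] assms fA' by (simp add: poly_Pp card_Diff_subset)
  finally have 1: "Res (A - A') B = (-1)^(card A - card A') * poly (Pp (A - A')) b * Res (A - A') (B - {b})" .
  have 2: "poly (Pp A) b = poly (Pp (A - A')) b * poly (Pp A') b"
    unfolding poly_Pp using prod.subset_diff[OF assms(3,1)] by simp
  show ?thesis unfolding cA_def 1 2 by (simp add: field_simps)
qed

lemma ptB_R:
  assumes "finite A" "b \<in> B" "B' \<subseteq> B - {b}" "finite B"
  shows "dB A B B' * poly (Pp B') b = ((-1)^card A / (-1)^card B') * poly (Pp A) b * dB A (B - {b}) B'"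
proof -
  have fB': "finite B'" using assms finite_subset by blast
  have eq: "B - B' = insert b (B - {b} - B')" using assms by auto
  have 1: "Res A (B - B') = (-1)^card A * poly (Pp A) b * Res A (B - {b} - B')"
    by (subst eq, subst Res_insert_right) (use assms prod_neg[of A b] in \<open>auto simp: poly_Pp\<close>)
  have 2: "Res B' (B - B') = (-1)^card B' * poly (Pp B') b * Res B' (B - {b} - B')"
    by (subst eq, subst Res_insert_right) (use assms fB' prod_neg[of B' b] in \<open>auto simp: poly_Pp\<close>)
  have n: "poly (Pp B') b \<noteq> 0" using poly_Pp_nz[OF fB'] assms by auto
  show ?thesis unfolding dB_def 1 2 using n by (simp add: field_simps)
qed

lemma evalB:
  assumes "finite A" "b \<in> B" "finite B" "p \<le> card A"
  shows "poly (G A B p es) b = (-1)^(card A - p) * poly (Pp A) b * (LS A (B - {b}) p es - RS A (B - {b}) p es)"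
proof -
  have L': "(\<Sum>A'\<in>{A'. A' \<subseteq> A \<and> card A' = p}. cA A B A' * wt es A' * poly (Pp A') b)
     = (-1)^(card A - p) * poly (Pp A) b * LS A (B - {b}) p es"
    unfolding LS_def sum_distrib_left
    by (rule sum.cong[OF refl]) (use ptB_L[OF assms(1,2) _ assms(3)] in \<open>auto simp: mult_ac\<close>)
  have sg: "(-1::'a)^(card A - p) = (-1)^card A / (-1)^p" using assms(4) by (simp add: power_diff)
  have "(\<Sum>B'\<in>{B'. B' \<subseteq> B \<and> card B' = p}. dB A B B' * wt es B' * poly (Pp B') b)
     = (\<Sum>B'\<in>{B'. B' \<subseteq> B - {b} \<and> card B' = p}. dB A B B' * wt es B' * poly (Pp B') b)"
    by (rule sum.mono_neutral_right)
       (use assms in \<open>auto intro: finite_subset poly_Pp_z simp: finite_Collect_subsets\<close>)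
  also have "\<dots> = (\<Sum>B'\<in>{B'. B' \<subseteq> B - {b} \<and> card B' = p}. (-1)^(card A - p) * poly (Pp A) b * (dB A (B - {b}) B' * wt es B'))"
    by (rule sum.cong[OF refl]) (use ptB_R[OF assms(1,2) _ assms(3)] sg in \<open>auto simp: mult_ac\<close>)
  finally have R': "(\<Sum>B'\<in>{B'. B' \<subseteq> B \<and> card B' = p}. dB A B B' * wt es B' * poly (Pp B') b)
     = (-1)^(card A - p) * poly (Pp A) b * RS A (B - {b}) p es" by (simp add: RS_def sum_distrib_left)
  show ?thesis using L' R' by (simp add: G_def poly_sum right_diff_distrib)
qed

lemma degPp_le: "S \<subseteq> A \<Longrightarrow> finite A \<Longrightarrow> card S = p \<Longrightarrow> degree (Pp S) \<le> p"
  by (metis degree_Pp finite_subset order_refl)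

lemma degree_G:
  assumes "finite A" "finite B"
  shows "degree (G A B p es) \<le> p"
  unfolding G_def
  by (intro degree_diff_le degree_sum_le degree_smult_le[THEN order_trans])
     (use assms in \<open>auto simp: finite_Collect_subsets intro: degPp_le\<close>)

lemma G_zero:
  assumes "finite S" "card S > p" "degree (G A B p es) \<le> p" "\<And>x. x \<in> S \<Longrightarrow> poly (G A B p es) x = 0"
  shows "G A B p es = 0"
proof (rule ccontr)
  assume "G A B p es \<noteq> 0"
  then have "card {x. poly (G A B p es) x = 0} \<le> degree (G A B p es)" by (rule card_poly_roots_bound)
  moreover have "card S \<le> card {x. poly (G A B p es) x = 0}"
    using assms(4) poly_roots_finite[OF \<open>G A B p es \<noteq> 0\<close>] by (intro card_mono) auto
  ultimately show False using assms by linarith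
qed

lemma LS_p: "finite A \<Longrightarrow> LS A B p [p] = LS A B p []"
  unfolding LS_def wt_def sg_def
  by (rule sum.cong[OF refl]) (auto intro: lead_Pp[THEN subst] finite_subset
     simp: lead_Pp[OF finite_subset])

lemma RS_p: "finite B \<Longrightarrow> RS A B p [p] = RS A B p []"
  unfolding RS_def wt_def sg_def
  by (rule sum.cong[OF refl]) (auto simp: lead_Pp[OF finite_subset])

lemma full_sub: "finite A \<Longrightarrow> {A'. A' \<subseteq> A \<and> card A' = card A} = {A}"
  using card_subset_eq by blast

theorem scalar:
  "finite A \<Longrightarrow> finite B \<Longrightarrow> p \<le> card A \<Longrightarrow> p \<le> card B \<Longrightarrow> length es \<le> card A - p
   \<Longrightarrow> LS A B p es = RS A B p es"
proof (induction "card A + card B" arbitrary: A B es rule: less_induct)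
  case less
  have Gz: "LS A B p (j#es') = RS A B p (j#es')" if "G A B p es' = 0" for j es'
    using coeff_G[of A B p es' j] that by simp
  have GA: "G A B p es' = 0" if "length es' \<le> card A - 1 - p" "p < card A" for es'
  proof (rule G_zero[OF less.prems(1) that(2) degree_G[OF less.prems(1,2)]])
    fix a assume a: "a \<in> A"
    have "LS (A - {a}) B p es' = RS (A - {a}) B p es'"
      by (rule less.hyps) (use less.prems a that in \<open>auto simp: card_Diff_singleton\<close>)
    then show "poly (G A B p es') a = 0" using evalA[OF less.prems(1) a less.prems(2)] by simp
  qed
  show ?case
  proof (cases es)
    case (Cons j es')
    then have "G A B p es' = 0" using GA less.prems by auto
    then show ?thesis using Gz Cons by simp
  next
    case Nil
    show ?thesis
    proof (cases "p < card A")
      case True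
      then have "G A B p [] = 0" using GA by auto
      then show ?thesis using Gz[of "[]" p] LS_p[OF less.prems(1)] RS_p[OF less.prems(2)] Nil by simp
    next
      case False
      then have pA: "p = card A" using less.prems by simp
      show ?thesis
      proof (cases "p < card B")
        case True
        have "G A B p [] = 0"
        proof (rule G_zero[OF less.prems(2) True degree_G[OF less.prems(1,2)]])
          fix b assume b: "b \<in> B"
          have "LS A (B - {b}) p [] = RS A (B - {b}) p []"
            by (rule less.hyps) (use less.prems b True in \<open>auto simp: card_Diff_singleton\<close>)
          then show "poly (G A B p []) b = 0" using evalB[OF less.prems(1) b less.prems(2,3)] by simp
        qed
        then show ?thesis using Gz[of "[]" p] LS_p[OF less.prems(1)] RS_p[OF less.prems(2)] Nil by simp
      next
        case False
        then have pB: "p = card B" using less.prems by simp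
        show ?thesis unfolding Nil LS_def RS_def pA
          using full_sub[OF less.prems(1)] full_sub[OF less.prems(2)] pB pA
          by (simp add: cA_def dB_def Res_def wt_def)
      qed
    qed
  qed
qed



lemma mconst_mult: "mconst (a * b) = mconst a * (mconst b :: 'k::field mpoly)"
  by (simp add: mconst_def mult_single)
lemma mconst_add: "mconst (a + b) = mconst a + (mconst b :: 'k::field mpoly)"
  by (simp add: mconst_def single_add)
lemma mconst_diff: "mconst (a - b) = mconst a - (mconst b :: 'k::field mpoly)"
  by (simp add: mconst_def single_diff)
lemma mconst_uminus: "mconst (- a) = - (mconst a :: 'k::field mpoly)"
  by (simp add: mconst_def single_uminus)
lemma mconst_0 [simp]: "mconst 0 = (0 :: 'k::field mpoly)" by (simp add: mconst_def)
lemma mconst_1 [simp]: "mconst 1 = (1 :: 'k::field mpoly)" by (simp add: mconst_def)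
lemma mconst_eq0: "(mconst a = (0 :: 'k::field mpoly)) = (a = 0)"
  by (metis inj_single injD mconst_0 mconst_def)
lemma inj_mconst: "inj (mconst :: 'k::field \<Rightarrow> 'k mpoly)"
  unfolding mconst_def by simp
lemma single_key_eq: "Poly_Mapping.single k (1::'b::zero_neq_one) = Poly_Mapping.single k' 1 \<Longrightarrow> k = k'"
proof (rule ccontr)
  assume h: "Poly_Mapping.single k (1::'b) = Poly_Mapping.single k' 1" "k \<noteq> k'"
  have "Poly_Mapping.lookup (Poly_Mapping.single k (1::'b)) k = 1" by (simp add: lookup_single)
  moreover have "Poly_Mapping.lookup (Poly_Mapping.single k' (1::'b)) k = 0" using h(2) by (simp add: lookup_single_not_eq)
  ultimately show False using h(1) by simp
qed

lemma inj_mvar: "inj (mvar :: nat \<Rightarrow> 'k::field mpoly)"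
  unfolding mvar_def by (rule injI) (drule single_key_eq, drule single_key_eq, assumption)

lemma mconst_sum: "mconst (sum f S) = (\<Sum>x\<in>S. (mconst (f x) :: 'k::field mpoly))"
  by (induction S rule: infinite_finite_induct) (auto simp: mconst_add)

lemma map_lin: "map_poly (mconst :: 'k::field \<Rightarrow> 'k mpoly) ([:-a,1:] * P) = [:-mconst a, 1:] * map_poly mconst P"
  by (rule poly_eqI) (simp add: coeff_map_poly mult_pCons_left coeff_pCons mconst_add mconst_diff mconst_mult mconst_uminus split: nat.split)

lemma poly_map_Pp: "finite S \<Longrightarrow> poly (map_poly (mconst :: 'k::field \<Rightarrow> 'k mpoly) (Pp S)) x = (\<Prod>a\<in>S. x - mconst a)"
proof (induction S rule: finite_induct)
  case empty then show ?case by (simp add: Pp_def)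
next
  case (insert a S)
  have eq: "Pp (insert a S) = [:-a,1:] * Pp S" using insert by (simp add: Pp_def)
  show ?case using insert.IH
    by (simp only: eq map_lin poly_mult prod.insert[OF insert.hyps]) simp
qed

lemma expand_lin: "finite S \<Longrightarrow> (\<Prod>a\<in>S. x - mconst a) = (\<Sum>j\<le>card S. mconst (sg j S) * (x :: 'k::field mpoly) ^ j)"
  by (simp add: poly_map_Pp[symmetric] poly_altdef degree_map_poly mconst_eq0 coeff_map_poly degree_Pp sg_def)

definition W :: "nat \<Rightarrow> 'k::field set \<Rightarrow> 'k mpoly" where
  "W r S = (\<Prod>i<r. \<Prod>a\<in>S. mvar i - mconst a)"

lemma Res_W: "Res (mvar ` {..<r} :: 'k::field mpoly set) (mconst ` S) = W r S"
  unfolding Res_def W_def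
  by (simp add: prod.reindex inj_on_subset[OF inj_mvar] inj_on_subset[OF inj_mconst])

lemma expand:
  assumes "finite F" "\<And>S. S \<in> F \<Longrightarrow> finite S \<and> card S = p"
  shows "(\<Sum>S\<in>F. mconst (f S * wt es S) * W (Suc r) S)
       = (\<Sum>j\<le>p. (\<Sum>S\<in>F. mconst (f S * wt (j#es) S) * W r S) * mvar r ^ j)"
proof -
  have "(\<Sum>S\<in>F. mconst (f S * wt es S) * W (Suc r) S)
      = (\<Sum>S\<in>F. \<Sum>j\<le>p. mconst (f S * wt (j#es) S) * W r S * mvar r ^ j)"
  proof (rule sum.cong[OF refl])
    fix S assume S: "S \<in> F"
    have "W (Suc r) S = W r S * (\<Sum>j\<le>p. mconst (sg j S) * mvar r ^ j)"
      using expand_lin[of S "mvar r"] assms(2)[OF S] by (simp add: W_def)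
    then show "mconst (f S * wt es S) * W (Suc r) S = (\<Sum>j\<le>p. mconst (f S * wt (j#es) S) * W r S * mvar r ^ j)"
      by (simp add: sum_distrib_left wt_Cons mconst_mult mult_ac)
  qed
  also have "\<dots> = (\<Sum>j\<le>p. (\<Sum>S\<in>F. mconst (f S * wt (j#es) S) * W r S) * mvar r ^ j)"
    by (subst sum.swap) (simp add: sum_distrib_right)
  finally show ?thesis .
qed

theorem mainT:
  "finite A \<Longrightarrow> finite B \<Longrightarrow> p \<le> card A \<Longrightarrow> p \<le> card B \<Longrightarrow> length es + r \<le> card A - p
   \<Longrightarrow> (\<Sum>A'\<in>{A'. A' \<subseteq> A \<and> card A' = p}. mconst (cA A B A' * wt es A') * W r A')
     = (\<Sum>B'\<in>{B'. B' \<subseteq> B \<and> card B' = p}. mconst (dB A B B' * wt es B') * W r B')"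
proof (induction r arbitrary: es)
  case 0
  have e: "LS A B p es = RS A B p es" by (rule scalar) (use 0 in auto)
  have W0: "\<And>S. W 0 S = 1" by (simp add: W_def)
  have "(\<Sum>A'\<in>{A'. A' \<subseteq> A \<and> card A' = p}. mconst (cA A B A' * wt es A') * W 0 A') = mconst (LS A B p es)"
    unfolding W0 mult_1_right LS_def by (rule mconst_sum[symmetric])
  moreover have "(\<Sum>B'\<in>{B'. B' \<subseteq> B \<and> card B' = p}. mconst (dB A B B' * wt es B') * W 0 B') = mconst (RS A B p es)"
    unfolding W0 mult_1_right RS_def by (rule mconst_sum[symmetric])
  ultimately show ?case using e by simp
next
  case (Suc r)
  have fA: "\<And>S. S \<in> {A'. A' \<subseteq> A \<and> card A' = p} \<Longrightarrow> finite S \<and> card S = p"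
    using Suc.prems finite_subset by blast
  have fB: "\<And>S. S \<in> {A'. A' \<subseteq> B \<and> card A' = p} \<Longrightarrow> finite S \<and> card S = p"
    using Suc.prems finite_subset by blast
  have IH: "(\<Sum>A'\<in>{A'. A' \<subseteq> A \<and> card A' = p}. mconst (cA A B A' * wt (j#es) A') * W r A')
     = (\<Sum>B'\<in>{B'. B' \<subseteq> B \<and> card B' = p}. mconst (dB A B B' * wt (j#es) B') * W r B')" for j
    by (rule Suc.IH) (use Suc.prems in simp_all)
  have fa: "finite {A'. A' \<subseteq> A \<and> card A' = p}" "finite {A'. A' \<subseteq> B \<and> card A' = p}"
    using Suc.prems by (simp_all add: finite_Collect_subsets)
  have L: "(\<Sum>A'\<in>{A'. A' \<subseteq> A \<and> card A' = p}. mconst (cA A B A' * wt es A') * W (Suc r) A')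
    = (\<Sum>j\<le>p. (\<Sum>S\<in>{A'. A' \<subseteq> A \<and> card A' = p}. mconst (cA A B S * wt (j#es) S) * W r S) * mvar r ^ j)"
    apply (rule expand)
    apply (fact fa(1))
    apply (erule fA)
    done
  have R: "(\<Sum>A'\<in>{A'. A' \<subseteq> B \<and> card A' = p}. mconst (dB A B A' * wt es A') * W (Suc r) A')
    = (\<Sum>j\<le>p. (\<Sum>S\<in>{A'. A' \<subseteq> B \<and> card A' = p}. mconst (dB A B S * wt (j#es) S) * W r S) * mvar r ^ j)"
    apply (rule expand)
    apply (fact fa(2))
    apply (erule fB)
    done
  show ?case unfolding L R by (rule sum.cong[OF refl]) (simp only: IH)
qed

theorem corollary3p2:
  fixes A B :: "'k::field set" and p r :: nat
  assumes "finite A" and "p \<le> card A" and "r \<le> card A - p"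
    and "finite B" and "card B \<ge> p"
  shows "(\<Sum>A'\<in>{A'. A' \<subseteq> A \<and> card A' = p}.
            mconst (Res (A - A') B / Res (A - A') A')
            * Res (mvar ` {..<r} :: 'k mpoly set) (mconst ` A'))
       = (\<Sum>B'\<in>{B'. B' \<subseteq> B \<and> card B' = p}.
            mconst (Res A (B - B') / Res B' (B - B'))
            * Res (mvar ` {..<r} :: 'k mpoly set) (mconst ` B'))"
proof -
  have wt0: "\<And>S. wt [] (S::'k set) = 1" by (simp add: wt_def)
  have "(\<Sum>A'\<in>{A'. A' \<subseteq> A \<and> card A' = p}. mconst (cA A B A' * wt [] A') * W r A')
     = (\<Sum>B'\<in>{B'. B' \<subseteq> B \<and> card B' = p}. mconst (dB A B B' * wt [] B') * W r B')"
    by (rule mainT) (use assms in simp_all)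
  then show ?thesis by (simp only: wt0 mult_1_right cA_def dB_def Res_W)
qed

end
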